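(* In the IM-OCP setting described in the context, for any initialization $r_1\in[0,B]$, any positive step sizes $(\eta_t)_{t\ge1}$, and any realization of the feedback indicators $(\mathrm{obs}_t)_{t\ge1}$, the iterates satisfy, for every $t>1$, $$r_t\in\left[-\frac{\alpha\,\varpi_t}{\mu},\; B+\frac{(1-\alpha)\,\varpi_t}{\mu}\right],\qquad \varpi_t=\max_{i\in\{1,\dots,t-1\}}\frac{\eta_i}{p_i}.$$
   Context: Fix $\alpha\in(0,1)$ and $B>0$. Let $(r_t^* )_{t\ge1}$ be an arbitrary deterministic sequence of scores with $r_t^*\in[0,B]$ (the score $r_t^*=s(X_t,Y_t)$ of the true label; the prediction set at time $t$ is $\{y: s(X_t,y)\le r_t\}$). Given thresholds $r_t$, the miscoverage indicator is $E_t=\mathbb{1}\{r_t^*>r_t\}$. The quantile loss is $\ell_{1-\alpha}(r,r^* )=(\alpha-\mathbb{1}\{r<r^*\})(r-r^* )$. Let $P$ be a probability distribution on $[0,B]$ with bounded density, $\sigma>0$, and $R(r)=\mathbb{E}_{r^*\sim P}[\ell_{1-\alpha}(r,r^* )]+\frac{\sigma}{2}r^2$; $R$ is differentiable and $\nabla R$ is a continuous strictly increasing bijection of $\mathbb{R}$. Let $\mu>0$ be a constant such that $R$ is $\mu$-strongly convex (e.g. $\mu=\sigma$). Feedback: $p_t\in(0,1]$ and $(\mathrm{obs}_t)_{t\ge1}$ are independent Bernoulli random variables with $\Pr(\mathrm{obs}_t=1)=p_t$. IM-OCP: given $r_1$ and step sizes $\eta_t>0$, for $t\ge2$ the threshold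 $r_t$ is defined by $$\nabla R(r_t)=\nabla R(r_{t-1})-\eta_{t-1}(\alpha-E_{t-1})\frac{\mathrm{obs}_{t-1}}{p_{t-1}},$$ i.e. $r_t=(\nabla R)^{-1}\big(\nabla R(r_{t-1})-\eta_{t-1}(\alpha-E_{t-1})\mathrm{obs}_{t-1}/p_{t-1}\big)$. *)

theory Defs
  imports "HOL-Probability.Probability"
begin

definition qloss :: "real \<Rightarrow> real \<Rightarrow> real \<Rightarrow> real" where
  "qloss \<alpha> r rs = (\<alpha> - (if r < rs then 1 else 0)) * (r - rs)"

definition Rfun :: "real \<Rightarrow> real measure \<Rightarrow> real \<Rightarrow> real \<Rightarrow> real" where
  "Rfun \<alpha> P \<sigma> r = (\<integral> rs. qloss \<alpha> r rs \<partial>P) + \<sigma> / 2 * r\<^sup>2"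

definition strongly_convex :: "real \<Rightarrow> (real \<Rightarrow> real) \<Rightarrow> bool" where
  "strongly_convex \<mu> R \<longleftrightarrow> convex_on UNIV (\<lambda>x. R x - \<mu> / 2 * x\<^sup>2)"

definition miscov :: "real \<Rightarrow> real \<Rightarrow> real" where
  "miscov rs r = (if rs > r then 1 else 0)"

end

theory Submission
  imports Defs
begin

lemma strong_mono_deriv:
  fixes R :: "real \<Rightarrow> real"
  assumes diff: "\<And>x. R differentiable (at x)"
    and sc: "strongly_convex \<mu> R"
    and xy: "x \<le> y"
  shows "\<mu> * (y - x) \<le> deriv R y - deriv R x"
proof -
  let ?h = "\<lambda>x. R x - \<mu> / 2 * x\<^sup>2"
  have cv: "convex_on UNIV ?h" using sc by (simp add: strongly_convex_def)
  have d: "(?h has_field_derivative (deriv R z - \<mu> * z)) (at z within UNIV)" for z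
  proof -
    have "(R has_real_derivative deriv R z) (at z)"
      using diff DERIV_deriv_iff_real_differentiable by blast
    then show ?thesis by (auto intro!: derivative_eq_intros)
  qed
  have 1: "?h y - ?h x \<ge> (deriv R x - \<mu> * x) * (y - x)"
    by (rule convex_on_imp_above_tangent[OF cv _ _ _ d]) auto
  have 2: "?h x - ?h y \<ge> (deriv R y - \<mu> * y) * (x - y)"
    by (rule convex_on_imp_above_tangent[OF cv _ _ _ d]) auto
  from 1 2 have "0 \<le> (deriv R y - \<mu> * y - (deriv R x - \<mu> * x)) * (y - x)"
    by (simp add: algebra_simps)
  then have "deriv R y - \<mu> * y - (deriv R x - \<mu> * x) \<ge> 0 \<or> y = x"
    using xy by (smt (verit) mult_less_0_iff)
  then show ?thesis by (auto simp: algebra_simps)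
qed

lemma step_bound:
  fixes g :: "real \<Rightarrow> real"
  assumes gm: "strict_mono g"
    and gs: "\<And>x y. x \<le> y \<Longrightarrow> \<mu> * (y - x) \<le> g y - g x"
    and mu: "0 < \<mu>" and al: "0 < \<alpha>" "\<alpha> < 1"
    and s: "s \<in> {0..B}" and w: "0 < w" "w \<le> c"
    and ob: "ob = 0 \<or> ob = 1"
    and upd: "g b = g a - w * (\<alpha> - miscov s a) * ob"
    and lo: "- \<alpha> * c / \<mu> \<le> a" and hi: "a \<le> B + (1 - \<alpha>) * c / \<mu>"
  shows "- \<alpha> * c / \<mu> \<le> b \<and> b \<le> B + (1 - \<alpha>) * c / \<mu>"
proof
  have mono: "g u \<le> g v \<Longrightarrow> u \<le> v" for u v
    using gm by (metis not_le strict_mono_less)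
  show "- \<alpha> * c / \<mu> \<le> b"
  proof (cases "a < 0")
    case True
    then have "miscov s a = 1" using s by (simp add: miscov_def)
    moreover have "w * (\<alpha> - 1) \<le> 0" using w al by (simp add: mult_nonneg_nonpos)
    ultimately have "g a \<le> g b" using upd ob by auto
    then show ?thesis using mono lo by force
  next
    case False
    show ?thesis
    proof (cases "b \<ge> a")
      case True then show ?thesis using lo by linarith
    next
      case nb: False
      have "miscov s a \<ge> 0" by (simp add: miscov_def)
      then have "g a - g b \<le> w * \<alpha>" using upd ob w al
        by (auto simp: algebra_simps mult_nonneg_nonneg)
      also have "\<dots> \<le> c * \<alpha>" using w al by simp
      finally have "\<mu> * (a - b) \<le> c * \<alpha>" using gs[of b a] nb by linarith
      then have "a - b \<le> c * \<alpha> / \<mu>" using mu by (simp add: field_simps)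
      then show ?thesis using False by (simp add: field_simps)
    qed
  qed
  show "b \<le> B + (1 - \<alpha>) * c / \<mu>"
  proof (cases "a > B")
    case True
    then have "miscov s a = 0" using s by (simp add: miscov_def)
    then have "g b \<le> g a" using upd ob w al by auto
    then show ?thesis using mono hi by force
  next
    case False
    show ?thesis
    proof (cases "b \<le> a")
      case True then show ?thesis using hi by linarith
    next
      case nb: False
      have "miscov s a \<le> 1" by (simp add: miscov_def)
      then have "g b - g a \<le> w * (1 - \<alpha>)" using upd ob w al
        by (auto simp: algebra_simps mult_left_mono)
      also have "\<dots> \<le> c * (1 - \<alpha>)" using w al by simp
      finally have "\<mu> * (b - a) \<le> c * (1 - \<alpha>)" using gs[of a b] nb by linarith
      then have "b - a \<le> c * (1 - \<alpha>) / \<mu>" using mu by (simp add: field_simps)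
      then show ?thesis using False by (simp add: field_simps)
    qed
  qed
qed

theorem lemma1:
  fixes \<alpha> B \<sigma> \<mu> :: real
    and P :: "real measure" and f :: "real \<Rightarrow> real" and M :: real
    and rstar :: "nat \<Rightarrow> real" and r :: "nat \<Rightarrow> real"
    and \<eta> :: "nat \<Rightarrow> real" and p :: "nat \<Rightarrow> real" and obs :: "nat \<Rightarrow> bool"
  assumes alpha: "0 < \<alpha>" "\<alpha> < 1"
    and B: "0 < B"
    and rstar: "\<And>t. t \<ge> 1 \<Longrightarrow> rstar t \<in> {0..B}"
    and P_density: "P = density lborel (\<lambda>x. ennreal (f x))"
    and f_meas: "f \<in> borel_measurable borel"
    and f_bounded: "\<And>x. 0 \<le> f x \<and> f x \<le> M"
    and f_supp: "\<And>x. x \<notin> {0..B} \<Longrightarrow> f x = 0"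
    and P_prob: "prob_space P"
    and sigma: "0 < \<sigma>"
    and R_diff: "\<And>x. Rfun \<alpha> P \<sigma> differentiable (at x)"
    and gradR_cont: "continuous_on UNIV (deriv (Rfun \<alpha> P \<sigma>))"
    and gradR_mono: "strict_mono (deriv (Rfun \<alpha> P \<sigma>))"
    and gradR_bij: "bij (deriv (Rfun \<alpha> P \<sigma>))"
    and mu: "0 < \<mu>" "strongly_convex \<mu> (Rfun \<alpha> P \<sigma>)"
    and p: "\<And>t. t \<ge> 1 \<Longrightarrow> 0 < p t \<and> p t \<le> 1"
    and eta: "\<And>t. t \<ge> 1 \<Longrightarrow> 0 < \<eta> t"
    and r1: "r 1 \<in> {0..B}"
    and update: "\<And>t. t \<ge> 2 \<Longrightarrow>
        deriv (Rfun \<alpha> P \<sigma>) (r t) =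
          deriv (Rfun \<alpha> P \<sigma>) (r (t - 1))
          - \<eta> (t - 1) * (\<alpha> - miscov (rstar (t - 1)) (r (t - 1)))
            * (if obs (t - 1) then 1 else 0) / p (t - 1)"
  shows "\<forall>t > 1.
           - \<alpha> * Max ((\<lambda>i. \<eta> i / p i) ` {1..t - 1}) / \<mu> \<le> r t \<and>
           r t \<le> B + (1 - \<alpha>) * Max ((\<lambda>i. \<eta> i / p i) ` {1..t - 1}) / \<mu>"
proof -
  define g where "g = deriv (Rfun \<alpha> P \<sigma>)"
  define W where "W n = Max ((\<lambda>i. \<eta> i / p i) ` {1..n})" for n
  have gs: "\<mu> * (y - x) \<le> g y - g x" if "x \<le> y" for x y
    unfolding g_def using strong_mono_deriv[OF R_diff mu(2) that] .
  have wpos: "0 < \<eta> i / p i" if "i \<ge> 1" for i using eta[OF that] p[OF that] by simp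
  have Wge: "\<eta> i / p i \<le> W n" if "1 \<le> i" "i \<le> n" for i n
    unfolding W_def using that by (intro Max_ge) auto
  have Wmono: "W n \<le> W (Suc n)" if "n \<ge> 1" for n
    unfolding W_def using that by (intro Max_mono) auto
  have main: "- \<alpha> * W (Suc n) / \<mu> \<le> r (n + 2) \<and> r (n + 2) \<le> B + (1 - \<alpha>) * W (Suc n) / \<mu>" for n
  proof (induction n)
    case 0
    have w: "0 < \<eta> 1 / p 1" "\<eta> 1 / p 1 \<le> W 1" using wpos Wge by auto
    have u: "g (r 2) = g (r 1) - \<eta> 1 / p 1 * (\<alpha> - miscov (rstar 1) (r 1)) * (if obs 1 then 1 else 0)"
      using update[of 2] unfolding g_def by simp
    have "- \<alpha> * W 1 / \<mu> \<le> 0" using w alpha mu by (simp add: divide_nonpos_pos)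
    moreover have "0 \<le> (1 - \<alpha>) * W 1 / \<mu>" using w alpha mu by simp
    ultimately show ?case
      using step_bound[OF gradR_mono[folded g_def] gs mu(1) alpha rstar[of 1] w _ u] r1
      by (simp add: numeral_2_eq_2)
  next
    case (Suc n)
    have w: "0 < \<eta> (Suc n + 1) / p (Suc n + 1)" "\<eta> (Suc n + 1) / p (Suc n + 1) \<le> W (Suc (Suc n))"
      using wpos Wge by auto
    have u: "g (r (Suc n + 2)) = g (r (n + 2)) - \<eta> (Suc n + 1) / p (Suc n + 1) * (\<alpha> - miscov (rstar (Suc n + 1)) (r (n + 2))) * (if obs (Suc n + 1) then 1 else 0)"
      using update[of "Suc n + 2"] unfolding g_def by simp
    have wm: "W (Suc n) \<le> W (Suc (Suc n))" using Wmono by simp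
    have "- \<alpha> * W (Suc (Suc n)) / \<mu> \<le> - \<alpha> * W (Suc n) / \<mu>"
      using wm alpha mu by (simp add: divide_right_mono)
    moreover have "(1 - \<alpha>) * W (Suc n) / \<mu> \<le> (1 - \<alpha>) * W (Suc (Suc n)) / \<mu>"
      using wm alpha mu by (simp add: divide_right_mono)
    ultimately show ?case
      using step_bound[OF gradR_mono[folded g_def] gs mu(1) alpha rstar[of "Suc n + 1"] w _ u] Suc.IH
      by simp
  qed
  show ?thesis
  proof (intro allI impI)
    fix t :: nat assume "t > 1"
    define n where "n = t - 2"
    have t: "t = n + 2" using \<open>t > 1\<close> unfolding n_def by simp
    show "- \<alpha> * Max ((\<lambda>i. \<eta> i / p i) ` {1..t - 1}) / \<mu> \<le> r t \<and>
           r t \<le> B + (1 - \<alpha>) * Max ((\<lambda>i. \<eta> i / p i) ` {1..t - 1}) / \<mu>"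
      using main[of n] unfolding t W_def by simp
  qed
qed

end
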